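(* For every natural number $n$ and all $x,y,z\in\mathbb{R}$ such that $\sin\frac{x+y+2z}{2}$, $\sin\frac{x+y-2z}{2}$, $\sin\frac{x-y+2z}{2}$, $\sin\frac{x-y-2z}{2}$ are all nonzero, $$\Upsilon_n(x,y,z):=\sum_{j=0}^{n}\sin((j+1)x)\sin((j+1)y)\sin((2n-2j+3)z)$$ equals $$\frac{\cos\frac{x-y+(8+4n)z}{2}}{8\sin\frac{x-y-2z}{2}}-\frac{\cos\frac{(2n+3)(x-y)+4z}{2}}{8\sin\frac{x-y-2z}{2}}+\frac{\cos\frac{(2n+3)(x-y)-4z}{2}}{8\sin\frac{x-y+2z}{2}}-\frac{\cos\frac{x-y-(8+4n)z}{2}}{8\sin\frac{x-y+2z}{2}}$$ $$+\frac{\cos\frac{(2n+3)(x+y)+4z}{2}}{8\sin\frac{x+y-2z}{2}}-\frac{\cos\frac{x+y+(8+4n)z}{2}}{8\sin\frac{x+y-2z}{2}}+\frac{\cos\frac{x+y-(8+4n)z}{2}}{8\sin\frac{x+y+2z}{2}}-\frac{\cos\frac{(2n+3)(x+y)-4z}{2}}{8\sin\frac{x+y+2z}{2}}.$$ *)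

theory Defs
  imports Complex_Main
begin

definition Upsilon :: "nat \<Rightarrow> real \<Rightarrow> real \<Rightarrow> real \<Rightarrow> real" where
  "Upsilon n x y z = (\<Sum>j=0..n. sin (real (j+1) * x) * sin (real (j+1) * y)
      * sin ((2 * real n - 2 * real j + 3) * z))"

end

theory Submission
  imports Defs
begin

lemma two_sin_sin: "2 * sin (u::real) * sin v = cos (u - v) - cos (u + v)"
  by (simp add: cos_diff cos_add)

lemma sum_sin_ap:
  fixes A d :: real
  assumes "sin (d/2) \<noteq> 0"
  shows "(\<Sum>j=0..n. sin (A + real j * d)) = (cos (A - d/2) - cos (A + (real n + 1/2) * d)) / (2 * sin (d/2))"
proof (induction n)
  case 0
  have "2 * sin A * sin (d/2) = cos (A - d/2) - cos (A + d/2)" by (rule two_sin_sin)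
  then show ?case using assms by (simp add: field_simps)
next
  case (Suc n)
  have e: "2 * sin (A + real (Suc n) * d) * sin (d/2) = cos (A + (real n + 1/2) * d) - cos (A + (real (Suc n) + 1/2) * d)"
  proof -
    have "2 * sin (A + real (Suc n) * d) * sin (d/2) = cos ((A + real (Suc n) * d) - d/2) - cos ((A + real (Suc n) * d) + d/2)"
      by (rule two_sin_sin)
    also have "(A + real (Suc n) * d) - d/2 = A + (real n + 1/2) * d" by (simp add: algebra_simps)
    also have "(A + real (Suc n) * d) + d/2 = A + (real (Suc n) + 1/2) * d" by (simp add: algebra_simps)
    finally show ?thesis .
  qed
  show ?case using Suc e assms by (simp add: field_simps)
qed

lemma prod3: "sin (p::real) * sin q * sin r = (sin (r + (p - q)) + sin (r - (p - q)) - sin (r + (p + q)) - sin (r - (p + q))) / 4"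
  by (simp add: sin_add sin_diff cos_add cos_diff algebra_simps field_simps)

theorem lemma11:
  fixes n :: nat and x y z :: real
  assumes "sin ((x + y + 2*z) / 2) \<noteq> 0"
      and "sin ((x + y - 2*z) / 2) \<noteq> 0"
      and "sin ((x - y + 2*z) / 2) \<noteq> 0"
      and "sin ((x - y - 2*z) / 2) \<noteq> 0"
  shows "Upsilon n x y z =
      cos ((x - y + (8 + 4 * real n) * z) / 2) / (8 * sin ((x - y - 2*z) / 2))
    - cos (((2 * real n + 3) * (x - y) + 4*z) / 2) / (8 * sin ((x - y - 2*z) / 2))
    + cos (((2 * real n + 3) * (x - y) - 4*z) / 2) / (8 * sin ((x - y + 2*z) / 2))
    - cos ((x - y - (8 + 4 * real n) * z) / 2) / (8 * sin ((x - y + 2*z) / 2))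
    + cos (((2 * real n + 3) * (x + y) + 4*z) / 2) / (8 * sin ((x + y - 2*z) / 2))
    - cos ((x + y + (8 + 4 * real n) * z) / 2) / (8 * sin ((x + y - 2*z) / 2))
    + cos ((x + y - (8 + 4 * real n) * z) / 2) / (8 * sin ((x + y + 2*z) / 2))
    - cos (((2 * real n + 3) * (x + y) - 4*z) / 2) / (8 * sin ((x + y + 2*z) / 2))"
proof -
  define A1 where "A1 = (2 * real n + 3) * z + (x - y)"
  define d1 where "d1 = (x - y) - 2*z"
  define A2 where "A2 = (2 * real n + 3) * z - (x - y)"
  define d2 where "d2 = - (x - y) - 2*z"
  define A3 where "A3 = (2 * real n + 3) * z + (x + y)"
  define d3 where "d3 = (x + y) - 2*z"
  define A4 where "A4 = (2 * real n + 3) * z - (x + y)"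
  define d4 where "d4 = - (x + y) - 2*z"
  have trm: "sin (real (j+1) * x) * sin (real (j+1) * y) * sin ((2 * real n - 2 * real j + 3) * z)
     = (sin (A1 + real j * d1) + sin (A2 + real j * d2) - sin (A3 + real j * d3) - sin (A4 + real j * d4)) / 4" for j
  proof -
    let ?p = "real (j+1) * x" and ?q = "real (j+1) * y" and ?r = "(2 * real n - 2 * real j + 3) * z"
    have "?r + (?p - ?q) = A1 + real j * d1" unfolding A1_def d1_def by (simp add: field_simps)
    moreover have "?r - (?p - ?q) = A2 + real j * d2" unfolding A2_def d2_def by (simp add: field_simps)
    moreover have "?r + (?p + ?q) = A3 + real j * d3" unfolding A3_def d3_def by (simp add: field_simps)
    moreover have "?r - (?p + ?q) = A4 + real j * d4" unfolding A4_def d4_def by (simp add: field_simps)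
    ultimately show ?thesis using prod3[of ?p ?q ?r] by simp
  qed
  have U: "Upsilon n x y z = ((\<Sum>j=0..n. sin (A1 + real j * d1)) + (\<Sum>j=0..n. sin (A2 + real j * d2))
      - (\<Sum>j=0..n. sin (A3 + real j * d3)) - (\<Sum>j=0..n. sin (A4 + real j * d4))) / 4"
    unfolding Upsilon_def trm by (simp only: sum_divide_distrib[symmetric] sum.distrib sum_subtractf)
  have s1: "sin (d1/2) = sin ((x - y - 2*z) / 2)" unfolding d1_def by (simp add: field_simps)
  have s2: "sin (d2/2) = - sin ((x - y + 2*z) / 2)"
  proof -
    have "d2/2 = - ((x - y + 2*z) / 2)" unfolding d2_def by (simp add: field_simps)
    then show ?thesis by (simp only: sin_minus)
  qed
  have s3: "sin (d3/2) = sin ((x + y - 2*z) / 2)" unfolding d3_def by (simp add: field_simps)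
  have s4: "sin (d4/2) = - sin ((x + y + 2*z) / 2)"
  proof -
    have "d4/2 = - ((x + y + 2*z) / 2)" unfolding d4_def by (simp add: field_simps)
    then show ?thesis by (simp only: sin_minus)
  qed
  have S1: "(\<Sum>j=0..n. sin (A1 + real j * d1)) = (cos ((x - y + (8 + 4 * real n) * z) / 2)
      - cos (((2 * real n + 3) * (x - y) + 4*z) / 2)) / (2 * sin ((x - y - 2*z) / 2))"
  proof -
    have a: "A1 - d1/2 = (x - y + (8 + 4 * real n) * z) / 2" unfolding A1_def d1_def by (simp add: field_simps)
    have b: "A1 + (real n + 1/2) * d1 = ((2 * real n + 3) * (x - y) + 4*z) / 2" unfolding A1_def d1_def by (simp add: field_simps)
    show ?thesis using sum_sin_ap[of d1 A1 n] assms s1 a b by simp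
  qed
  have S2: "(\<Sum>j=0..n. sin (A2 + real j * d2)) = (cos ((x - y - (8 + 4 * real n) * z) / 2)
      - cos (((2 * real n + 3) * (x - y) - 4*z) / 2)) / (- 2 * sin ((x - y + 2*z) / 2))"
  proof -
    have a: "A2 - d2/2 = - ((x - y - (8 + 4 * real n) * z) / 2)" unfolding A2_def d2_def by (simp add: field_simps)
    have b: "A2 + (real n + 1/2) * d2 = - (((2 * real n + 3) * (x - y) - 4*z) / 2)" unfolding A2_def d2_def by (simp add: field_simps)
    show ?thesis using sum_sin_ap[of d2 A2 n] assms s2 a b by simp
  qed
  have S3: "(\<Sum>j=0..n. sin (A3 + real j * d3)) = (cos ((x + y + (8 + 4 * real n) * z) / 2)
      - cos (((2 * real n + 3) * (x + y) + 4*z) / 2)) / (2 * sin ((x + y - 2*z) / 2))"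
  proof -
    have a: "A3 - d3/2 = (x + y + (8 + 4 * real n) * z) / 2" unfolding A3_def d3_def by (simp add: field_simps)
    have b: "A3 + (real n + 1/2) * d3 = ((2 * real n + 3) * (x + y) + 4*z) / 2" unfolding A3_def d3_def by (simp add: field_simps)
    show ?thesis using sum_sin_ap[of d3 A3 n] assms s3 a b by simp
  qed
  have S4: "(\<Sum>j=0..n. sin (A4 + real j * d4)) = (cos ((x + y - (8 + 4 * real n) * z) / 2)
      - cos (((2 * real n + 3) * (x + y) - 4*z) / 2)) / (- 2 * sin ((x + y + 2*z) / 2))"
  proof -
    have a: "A4 - d4/2 = - ((x + y - (8 + 4 * real n) * z) / 2)" unfolding A4_def d4_def by (simp add: field_simps)
    have b: "A4 + (real n + 1/2) * d4 = - (((2 * real n + 3) * (x + y) - 4*z) / 2)" unfolding A4_def d4_def by (simp add: field_simps)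
    show ?thesis using sum_sin_ap[of d4 A4 n] assms s4 a b by simp
  qed
  show ?thesis unfolding U S1 S2 S3 S4 using assms by (simp add: field_simps)
qed

end
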